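(* Let $G\in\mathfrak{M}$, $\phi=\phi_G$, and let $\phi^c(x)=\inf_{y\in\mathbb{R}^2}(c(x,y)-\phi(y))$, $x\in\mathbb{R}^2$. Then $\phi$ and $\phi^c$ take values in $[-\infty,0]$, $\phi^c\le\phi$, and $$G=\{y\in\mathbb{R}^2:\phi(y)=0\}=\{x\in\mathbb{R}^2:\phi^c(x)=0\}.$$
   Context: $c(x,y)=(x_1-y_1)(x_2-y_2)$ for $x,y\in\mathbb{R}^2$. $\mathfrak{M}$: family of maximal monotone sets $G\subset\mathbb{R}^2$ (monotone: $c(r,s)\ge0$ for all $r,s\in G$; maximal: not a proper subset of a monotone set). $\phi_G(y)=\inf_{x\in G}c(x,y)$. *)

theory Defs
  imports "HOL-Analysis.Analysis" "HOL-Library.Extended_Real"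
begin

definition cost :: "real \<times> real \<Rightarrow> real \<times> real \<Rightarrow> real" where
  "cost x y = (fst x - fst y) * (snd x - snd y)"

definition monotone_set :: "(real \<times> real) set \<Rightarrow> bool" where
  "monotone_set G \<longleftrightarrow> (\<forall>r\<in>G. \<forall>s\<in>G. cost r s \<ge> 0)"

definition maximal_monotone :: "(real \<times> real) set \<Rightarrow> bool" where
  "maximal_monotone G \<longleftrightarrow> monotone_set G \<and>
     (\<forall>H. monotone_set H \<and> G \<subseteq> H \<longrightarrow> H = G)"

definition phi :: "(real \<times> real) set \<Rightarrow> real \<times> real \<Rightarrow> ereal" where
  "phi G y = (INF x\<in>G. ereal (cost x y))"

definition phi_c :: "(real \<times> real) set \<Rightarrow> real \<times> real \<Rightarrow> ereal" where
  "phi_c G x = (INF y. ereal (cost x y) - phi G y)"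

end

theory Submission
  imports Defs
begin

lemma cost_sym: "cost x y = cost y x"
  unfolding cost_def by (simp add: algebra_simps)

lemma cost_self: "cost x x = 0"
  unfolding cost_def by simp

lemma not_in_neg:
  assumes "maximal_monotone G" "y \<notin> G"
  shows "\<exists>x\<in>G. cost x y < 0"
proof (rule ccontr)
  assume "\<not> ?thesis"
  hence h: "\<forall>x\<in>G. cost x y \<ge> 0" by auto
  have "monotone_set (insert y G)"
    using assms(1) h unfolding maximal_monotone_def monotone_set_def
    by (auto simp: cost_self cost_sym[of y])
  hence "insert y G = G" using assms(1) unfolding maximal_monotone_def by blast
  thus False using assms(2) by blast
qed

lemma phi_in:
  assumes "maximal_monotone G" "y \<in> G"
  shows "phi G y = 0"
proof -
  have "phi G y \<le> ereal (cost y y)" unfolding phi_def using assms(2) by (rule INF_lower)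
  moreover have "phi G y \<ge> 0" unfolding phi_def
    using assms unfolding maximal_monotone_def monotone_set_def
    by (auto intro!: INF_greatest)
  ultimately show ?thesis by (simp add: cost_self zero_ereal_def[symmetric])
qed

lemma phi_out:
  assumes "maximal_monotone G" "y \<notin> G"
  shows "phi G y < 0"
proof -
  obtain x where "x \<in> G" "cost x y < 0" using not_in_neg[OF assms] by blast
  have "phi G y \<le> ereal (cost x y)" unfolding phi_def using \<open>x \<in> G\<close> by (rule INF_lower)
  thus ?thesis using \<open>cost x y < 0\<close> proof -
    have "ereal (cost x y) < 0" using \<open>cost x y < 0\<close> by simp
    thus ?thesis using \<open>phi G y \<le> ereal (cost x y)\<close> by (rule le_less_trans[rotated])
  qed
qed

lemma phi_le0: "maximal_monotone G \<Longrightarrow> phi G y \<le> 0"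
  using phi_in phi_out by (metis less_imp_le order_refl)

lemma phic_le_phi:
  assumes "maximal_monotone G"
  shows "phi_c G x \<le> phi G x"
  unfolding phi_def
proof (rule INF_greatest)
  fix z assume z: "z \<in> G"
  have "phi_c G x \<le> ereal (cost x z) - phi G z" unfolding phi_c_def by (rule INF_lower) simp
  also have "\<dots> = ereal (cost z x)" using phi_in[OF assms z] by (simp add: cost_sym)
  finally show "phi_c G x \<le> ereal (cost z x)" .
qed

lemma phic_in:
  assumes "maximal_monotone G" "x \<in> G"
  shows "phi_c G x \<ge> 0"
  unfolding phi_c_def
proof (rule INF_greatest)
  fix y
  have "phi G y \<le> ereal (cost x y)" unfolding phi_def using assms(2) by (rule INF_lower)
  thus "0 \<le> ereal (cost x y) - phi G y"
    by (cases "phi G y") auto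
qed

theorem lemma16:
  assumes "maximal_monotone G"
  shows "(\<forall>y. phi G y \<le> 0) \<and> (\<forall>x. phi_c G x \<le> 0) \<and> (\<forall>x. phi_c G x \<le> phi G x)
         \<and> G = {y. phi G y = 0} \<and> G = {x. phi_c G x = 0}"
proof (intro conjI allI)
  fix y show "phi G y \<le> 0" using phi_le0[OF assms] .
next
  fix x show "phi_c G x \<le> 0" using phi_le0[OF assms] phic_le_phi[OF assms] order_trans by blast
next
  fix x show "phi_c G x \<le> phi G x" using phic_le_phi[OF assms] .
next
  show "G = {y. phi G y = 0}" using phi_in[OF assms] phi_out[OF assms] by force
next
  show "G = {x. phi_c G x = 0}"
  proof (intro set_eqI iffI)
    fix x assume "x \<in> G"
    have "phi_c G x \<le> 0" using phic_le_phi[OF assms, of x] phi_in[OF assms \<open>x \<in> G\<close>] by simp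
    thus "x \<in> {x. phi_c G x = 0}" using phic_in[OF assms \<open>x \<in> G\<close>] by simp
  next
    fix x assume "x \<in> {x. phi_c G x = 0}"
    hence "phi_c G x = 0" by simp
    show "x \<in> G"
    proof (rule ccontr)
      assume "x \<notin> G"
      hence "phi G x < 0" by (rule phi_out[OF assms])
      thus False using phic_le_phi[OF assms, of x] \<open>phi_c G x = 0\<close> by simp
    qed
  qed
qed

end
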